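(* (1) For every $t\ge7$, $\mathfrak{e}^E_t\in\mathcal{E}(\mathcal{P}^{s+}_{3,5})$. (2) If $t\ge7$ and $f\in\mathcal{P}^{s+}_{3,5}$ satisfies $f(t,1,1)=f(0,1,1)=f(0,0,1)=0$, then $f=\lambda\mathfrak{e}^E_t$ for some $\lambda\ge0$. (3) $\mathfrak{e}^E_\infty=s_4\in\mathcal{E}(\mathcal{P}^{s+}_{3,5})$. (4) If $f\in\mathcal{P}^{s+}_{3,5}$ satisfies $f(0,1,1)=f(0,0,1)=f_a(0,0,1)=f_{ab}(0,0,1)=0$, then $f=\lambda s_4$ for some $\lambda\ge0$.
   Context: Let $a,b,c$ be variables. For nonnegative integers $m,n$ put $S_{m,n}=a^mb^n+b^mc^n+c^ma^n$, $S_n=S_{n,0}=a^n+b^n+c^n$, $T_{m,n}=S_{m,n}+S_{n,m}$, $U=abc$ (so $S_{1,1}=ab+bc+ca$). Let $\mathcal{H}^s_{3,5}$ be the real vector space of symmetric homogeneous polynomials of degree 5 in $\mathbb{R}[a,b,c]$; it has basis $s_0=S_5-US_{1,1}$, $s_1=T_{4,1}-2US_{1,1}$, $s_2=T_{3,2}-2US_{1,1}$, $s_3=US_2-US_{1,1}$, $s_4=US_{1,1}$. Let $\mathcal{P}^{s+}_{3,5}=\{f\in\mathcal{H}^s_{3,5}: f(a,b,c)\ge 0\text{ for all }a,b,c\ge0\}$. For a closed convex cone $\mathcal{P}$, an element $f\in\mathcal{P}\setminus\{0\}$ is extremal if whenever $f=g+h$ with $g,h\in\mathcal{P}$ we have $g,h\in\mathbb{R}_{\ge0}f$;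 $\mathcal{E}(\mathcal{P})$ is the set of extremal elements. Subscripts denote partial derivatives: $f_a=\partial f/\partial a$, $f_{ab}=\partial^2f/\partial a\partial b$. Family E: $\mathfrak{e}^E_t=s_1-s_2-\frac{4t^2+5t+3}{t+2}s_3+\frac{(t-1)^3}{t+2}s_4$, and $\mathfrak{e}^E_\infty=s_4$. *)

theory Defs
  imports "HOL-Analysis.Analysis"
begin

text \<open>Polynomials in a,b,c are represented by their (real) polynomial functions
  \<open>real \<Rightarrow> real \<Rightarrow> real \<Rightarrow> real\<close>; a polynomial is determined by its function.\<close>

type_synonym poly3 = "real \<Rightarrow> real \<Rightarrow> real \<Rightarrow> real"

definition Smn :: "nat \<Rightarrow> nat \<Rightarrow> poly3" where
  "Smn m n = (\<lambda>a b c. a^m * b^n + b^m * c^n + c^m * a^n)"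

definition Sn :: "nat \<Rightarrow> poly3" where
  "Sn n = Smn n 0"

definition Tmn :: "nat \<Rightarrow> nat \<Rightarrow> poly3" where
  "Tmn m n = (\<lambda>a b c. Smn m n a b c + Smn n m a b c)"

definition U :: poly3 where
  "U = (\<lambda>a b c. a * b * c)"

definition s0 :: poly3 where "s0 = (\<lambda>a b c. Sn 5 a b c - U a b c * Smn 1 1 a b c)"
definition s1 :: poly3 where "s1 = (\<lambda>a b c. Tmn 4 1 a b c - 2 * U a b c * Smn 1 1 a b c)"
definition s2 :: poly3 where "s2 = (\<lambda>a b c. Tmn 3 2 a b c - 2 * U a b c * Smn 1 1 a b c)"
definition s3 :: poly3 where "s3 = (\<lambda>a b c. U a b c * Sn 2 a b c - U a b c * Smn 1 1 a b c)"
definition s4 :: poly3 where "s4 = (\<lambda>a b c. U a b c * Smn 1 1 a b c)"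

text \<open>The space of symmetric homogeneous quintics, as the span of its basis.\<close>
definition H35 :: "poly3 set" where
  "H35 = {f. \<exists>c0 c1 c2 c3 c4 :: real. f = (\<lambda>a b c.
      c0 * s0 a b c + c1 * s1 a b c + c2 * s2 a b c + c3 * s3 a b c + c4 * s4 a b c)}"

definition P35 :: "poly3 set" where
  "P35 = {f \<in> H35. \<forall>a b c. a \<ge> 0 \<longrightarrow> b \<ge> 0 \<longrightarrow> c \<ge> 0 \<longrightarrow> f a b c \<ge> 0}"

definition extremal :: "poly3 set \<Rightarrow> poly3 set" where
  "extremal P = {f \<in> P. f \<noteq> (\<lambda>a b c. 0) \<and>
     (\<forall>g \<in> P. \<forall>h \<in> P. f = (\<lambda>a b c. g a b c + h a b c) \<longrightarrow>
        (\<exists>l\<ge>0. g = (\<lambda>a b c. l * f a b c)) \<and> (\<exists>l\<ge>0. h = (\<lambda>a b c. l * f a b c)))}"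

definition eE :: "real \<Rightarrow> poly3" where
  "eE t = (\<lambda>a b c. s1 a b c - s2 a b c - (4*t^2 + 5*t + 3) / (t + 2) * s3 a b c
                   + (t - 1)^3 / (t + 2) * s4 a b c)"

definition pd_a :: "poly3 \<Rightarrow> real \<Rightarrow> real \<Rightarrow> real \<Rightarrow> real" where
  "pd_a f a b c = deriv (\<lambda>x. f x b c) a"

definition pd_ab :: "poly3 \<Rightarrow> real \<Rightarrow> real \<Rightarrow> real \<Rightarrow> real" where
  "pd_ab f a b c = deriv (\<lambda>y. pd_a f a y c) b"

end

theory Submission
  imports Defs
begin

definition Dl :: "real \<Rightarrow> real \<Rightarrow> real \<Rightarrow> real" where
  "Dl p q r = p^2*q^2 - 4*q^3 + r*(18*p*q - 4*p^3) - 27*r^2"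
lemma core:
  fixes p q r t :: real
  assumes t: "t \<ge> 7" and p: "p \<ge> 0" and q: "q \<ge> 0" and r: "r \<ge> 0"
    and pq: "3*q \<le> p^2" and schur: "(p^2-q)*(4*q-p^2) \<le> 6*p*r"
    and disc: "Dl p q r \<ge> 0" and q0: "q = 0 \<longrightarrow> r = 0"
  shows "(t+2)*p*q*(p^2-4*q) + r*((t+2)^2*(t+5)*q - (2*t+1)^2*p^2) \<ge> 0"
proof -
  define A where "A = (t+2)*p*q*(p^2-4*q)"
  define B where "B = (t+2)^2*(t+5)*q - (2*t+1)^2*p^2"
  have tp: "t + 2 > 0" using t by simp
  have "0 \<le> A + r*B"
  proof (cases "q = 0")
    case True thus ?thesis using q0 by (simp add: A_def)
  next
    case qn: False
    hence qp: "q > 0" using q by simp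
    show ?thesis
    proof (cases "p^2 \<le> 4*q")
      case True
      have c1: "(t+2)^2*(t+5) - 4*(2*t+1)^2 \<ge> 0"
      proof -
        have e: "(t+2)^2*(t+5) - 4*(2*t+1)^2 = t^2*(t-7) + 8*(t+2)" by (simp add: algebra_simps power2_eq_square)
        have "t^2*(t-7) \<ge> 0" using t by simp
        thus ?thesis unfolding e using tp by simp
      qed
      have B0: "B \<ge> 0"
      proof -
        have "(2*t+1)^2*p^2 \<le> (2*t+1)^2*(4*q)" using True by (simp add: mult_left_mono)
        hence "B \<ge> q*((t+2)^2*(t+5) - 4*(2*t+1)^2)" unfolding B_def by (simp add: algebra_simps)
        moreover have "q*((t+2)^2*(t+5) - 4*(2*t+1)^2) \<ge> 0" using c1 qp by simp
        ultimately show ?thesis by linarith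
      qed
      have "p^2 > 0" using pq qp by linarith
      hence "p \<noteq> 0" by auto
      hence pp: "p > 0" using p by simp
      define uu where "uu = 4*q - p^2"
      define vv where "vv = p^2 - 3*q"
      have uu0: "uu \<ge> 0" using True uu_def by simp
      have vv0: "vv \<ge> 0" using pq vv_def by simp
      define K where "K = B*(p^2-q) - 6*(t+2)*p^2*q"
      have Kuv: "K = 3*t^2*(t-7)* vv^2 + (5*t^3 - 23*t^2 + 10*t - 1)*uu* vv + 2*(t-1)^3*uu^2"
      proof -
        have "p^2 = 4* vv + 3*uu" "q = uu + vv" using uu_def vv_def by simp_all
        thus ?thesis unfolding K_def B_def by (simp add: algebra_simps power2_eq_square power3_eq_cube)
      qed
      have k1: "5*t^3 - 23*t^2 + 10*t - 1 \<ge> 0"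
      proof -
        have e: "5*t^3 - 23*t^2 + 10*t - 1 = t^2*(5*t-23) + (10*t - 1)" by (simp add: algebra_simps power2_eq_square power3_eq_cube)
        have "t^2*(5*t-23) \<ge> 0" using t by simp
        thus ?thesis unfolding e using t by simp
      qed
      have K0: "K \<ge> 0" unfolding Kuv using t uu0 vv0 k1
        by (intro add_nonneg_nonneg mult_nonneg_nonneg) auto
      have "6*p*(A + r*B) = 6*p*A + B*(6*p*r)" by (simp add: algebra_simps)
      also have "\<dots> \<ge> 6*p*A + B*((p^2-q)*(4*q-p^2))" using schur B0 by (simp add: mult_left_mono)
      also have "6*p*A + B*((p^2-q)*(4*q-p^2)) = uu*K" unfolding A_def K_def uu_def
        by (simp add: algebra_simps power2_eq_square)
      finally have "6*p*(A+r*B) \<ge> 0" using mult_nonneg_nonneg[OF uu0 K0] by linarith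
      thus ?thesis using pp by (simp add: zero_le_mult_iff)
    next
      case False
      hence big: "p^2 > 4*q" by simp
      have "p^2 > 0" using big qp by linarith
      hence "p \<noteq> 0" by auto
      hence pp: "p > 0" using p by simp
      have A0: "A > 0" unfolding A_def using tp qp big pp
        by (intro mult_pos_pos) auto
      show ?thesis
      proof (cases "B \<ge> 0")
        case True thus ?thesis using A0 r by simp
      next
        case False
        hence Bn: "B < 0" by simp
        show ?thesis
        proof (rule ccontr)
          assume "\<not> 0 \<le> A + r*B"
          hence neg: "A + r*B < 0" by simp
          define r0 where "r0 = -A/B"
          have r0p: "r0 > 0" unfolding r0_def using A0 Bn by (simp add: divide_pos_neg)
          have "r*B < -A" using neg by simp
          hence "(-A)/B < r" using neg_divide_less_eq[OF Bn, of "-A" r] by (simp add: mult.commute)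
          hence rr0: "r > r0" unfolding r0_def by simp
          define L where "L = (t+5)^2*q - 4*(t+2)*p^2"
          have L0: "L < 0"
          proof -
            have "(t+2)^2*L = (t+5)*((t+2)^2*(t+5)*q) - 4*(t+2)^3*p^2" unfolding L_def
              by (simp add: algebra_simps power2_eq_square power3_eq_cube)
            also have "\<dots> < (t+5)*((2*t+1)^2*p^2) - 4*(t+2)^3*p^2"
              using Bn tp unfolding B_def by simp
            also have "\<dots> = -27*(t+1)*p^2" by (simp add: algebra_simps power2_eq_square power3_eq_cube)
            also have "\<dots> \<le> 0" using t by (intro mult_nonpos_nonneg) auto
            finally have "(t+2)^2*L < 0" .
            thus ?thesis using tp by (simp add: mult_less_0_iff)
          qed
          have E1: "B^2 * Dl p q r0 = B^2*(p^2*q^2-4*q^3) - A*B*(18*p*q-4*p^3) - 27*A^2"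
            unfolding Dl_def r0_def using Bn by (simp add: power2_eq_square field_simps)
          have E2: "B^2*(p^2*q^2-4*q^3) - A*B*(18*p*q-4*p^3) - 27*A^2 = q*(p^2-4*q)*(((t+2)^2*q - (2*t+1)*p^2)^2 * L)"
            unfolding A_def B_def L_def by (simp add: algebra_simps power2_eq_square power3_eq_cube)
          have Ediff: "B^2 * Dl p q r0 = q*(p^2-4*q)*(((t+2)^2*q - (2*t+1)*p^2)^2 * L)"
            using E1 E2 by simp
          have "B^2 * Dl p q r0 \<le> 0" unfolding Ediff using qp big L0
            by (intro mult_nonneg_nonpos) auto
          hence Dr0: "Dl p q r0 \<le> 0" using Bn by (simp add: mult_le_0_iff)
          have ident: "r * Dl p q r0 = (r - r0)*Dl p q 0 + r0*Dl p q r + 27*r*r0*(r-r0)"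
            unfolding Dl_def by (simp add: algebra_simps power2_eq_square power3_eq_cube)
          have "Dl p q 0 \<ge> 0" unfolding Dl_def using big qp
            by (simp add: power2_eq_square power3_eq_cube algebra_simps)
          hence i1: "(r - r0)*Dl p q 0 \<ge> 0" using rr0 by simp
          have i2: "r0*Dl p q r \<ge> 0" using r0p disc by simp
          have i3: "27*r*r0*(r-r0) > 0" using rr0 r0p by simp
          have "r * Dl p q r0 > 0" unfolding ident using i1 i2 i3 by linarith
          moreover have "r * Dl p q r0 \<le> 0" using Dr0 r by (simp add: mult_nonneg_nonpos)
          ultimately show False by simp
        qed
      qed
    qed
  qed
  thus ?thesis by (simp add: A_def B_def)
qed


lemma pw4: "(x::real)^4 = x*x*x*x" by (simp add: numeral_eq_Suc)
lemma pw5: "(x::real)^5 = x*x*x*x*x" by (simp add: numeral_eq_Suc)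

lemmas ev = s0_def s1_def s2_def s3_def s4_def Sn_def Tmn_def Smn_def U_def

definition sch :: "real \<Rightarrow> real \<Rightarrow> real \<Rightarrow> real" where
  "sch a b c = a^2*(a-b)*(a-c) + b^2*(b-a)*(b-c) + c^2*(c-a)*(c-b)"

lemma sch_ord:
  assumes "a \<ge> b" "b \<ge> c" "c \<ge> 0"
  shows "sch a b c \<ge> 0"
proof -
  have e: "sch a b c = (a-b)*(a^2*(a-c) - b^2*(b-c)) + c^2*((a-c)*(b-c))"
    unfolding sch_def by (simp add: algebra_simps power2_eq_square)
  have "b^2 \<le> a^2" using assms by (simp add: power_mono)
  hence "b^2*(b-c) \<le> a^2*(a-c)" using assms
    by (intro mult_mono) auto
  hence "(a-b)*(a^2*(a-c) - b^2*(b-c)) \<ge> 0" using assms by simp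
  moreover have "c^2*((a-c)*(b-c)) \<ge> 0" using assms by simp
  ultimately show ?thesis unfolding e by linarith
qed

lemma sch_nonneg:
  assumes "a \<ge> 0" "b \<ge> 0" "c \<ge> 0"
  shows "sch a b c \<ge> 0"
proof -
  have s1: "sch a b c = sch b a c" "sch a b c = sch a c b" "sch a b c = sch c b a"
    "sch a b c = sch b c a" "sch a b c = sch c a b"
    unfolding sch_def by (simp_all add: algebra_simps)
  consider "a \<ge> b" "b \<ge> c" | "a \<ge> c" "c \<ge> b" | "b \<ge> a" "a \<ge> c" | "b \<ge> c" "c \<ge> a"
    | "c \<ge> a" "a \<ge> b" | "c \<ge> b" "b \<ge> a" by linarith
  thus ?thesis
  proof cases
    case 1 thus ?thesis using sch_ord assms by simp
  next
    case 2
    have "sch a c b \<ge> 0" using 2 assms by (intro sch_ord) auto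
    thus ?thesis using s1(2) by simp
  next
    case 3
    have "sch b a c \<ge> 0" using 3 assms by (intro sch_ord) auto
    thus ?thesis using s1(1) by simp
  next
    case 4
    have "sch b c a \<ge> 0" using 4 assms by (intro sch_ord) auto
    thus ?thesis using s1(4) by simp
  next
    case 5
    have "sch c a b \<ge> 0" using 5 assms by (intro sch_ord) auto
    thus ?thesis using s1(5) by simp
  next
    case 6
    have "sch c b a \<ge> 0" using 6 assms by (intro sch_ord) auto
    thus ?thesis using s1(3) by simp
  qed
qed

lemma eE_nonneg:
  fixes t a b c :: real
  assumes t: "t \<ge> 7" and a: "a \<ge> 0" and b: "b \<ge> 0" and c: "c \<ge> 0"
  shows "eE t a b c \<ge> 0"
proof -
  define p where "p = a+b+c"
  define q where "q = a*b+b*c+c*a"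
  define r where "r = a*b*c"
  have tp: "t+2 > 0" using t by simp
  have idt: "(t+2) * eE t a b c = (t+2)*p*q*(p^2-4*q) + r*((t+2)^2*(t+5)*q - (2*t+1)^2*p^2)"
  proof -
    have "(t+2) * eE t a b c = (t+2)*(s1 a b c - s2 a b c) - (4*t^2 + 5*t + 3) * s3 a b c
                   + (t - 1)^3 * s4 a b c"
    proof -
      define k where "k = (4*t^2 + 5*t + 3) / (t + 2)"
      define m where "m = (t - 1)^3 / (t + 2)"
      have k: "(t+2)*k = 4*t^2 + 5*t + 3" unfolding k_def using tp by simp
      have m: "(t+2)*m = (t - 1)^3" unfolding m_def using tp by simp
      have "(t+2) * eE t a b c = (t+2)*(s1 a b c - s2 a b c) - ((t+2)*k) * s3 a b c + ((t+2)*m) * s4 a b c"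
        unfolding eE_def k_def[symmetric] m_def[symmetric] by (simp add: algebra_simps)
      thus ?thesis unfolding k m .
    qed
    also have "\<dots> = (t+2)*p*q*(p^2-4*q) + r*((t+2)^2*(t+5)*q - (2*t+1)^2*p^2)"
      unfolding ev p_def q_def r_def by (simp add: algebra_simps power2_eq_square power3_eq_cube pw4 pw5)
    finally show ?thesis .
  qed
  have p0: "p \<ge> 0" "q \<ge> 0" "r \<ge> 0" using a b c unfolding p_def q_def r_def by simp_all
  have pq: "3*q \<le> p^2"
  proof -
    have "p^2 - 3*q = ((a-b)^2 + (b-c)^2 + (c-a)^2)/2" unfolding p_def q_def
      by (simp add: algebra_simps power2_eq_square)
    moreover have "((a-b)^2 + (b-c)^2 + (c-a)^2)/2 \<ge> 0" by simp
    ultimately show ?thesis by linarith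
  qed
  have schur: "(p^2-q)*(4*q-p^2) \<le> 6*p*r"
  proof -
    have "6*p*r - (p^2-q)*(4*q-p^2) = sch a b c" unfolding sch_def p_def q_def r_def
      by (simp add: algebra_simps power2_eq_square power3_eq_cube)
    thus ?thesis using sch_nonneg[OF a b c] by linarith
  qed
  have disc: "Dl p q r \<ge> 0"
  proof -
    have "Dl p q r = ((a-b)*(b-c)*(c-a))^2" unfolding Dl_def p_def q_def r_def
      by (simp add: algebra_simps power2_eq_square power3_eq_cube)
    thus ?thesis by simp
  qed
  have q0: "q = 0 \<longrightarrow> r = 0"
  proof
    assume "q = 0"
    moreover have "a*b \<ge> 0" "b*c \<ge> 0" "c*a \<ge> 0" using a b c by simp_all
    ultimately have "a*b = 0" unfolding q_def by linarith
    thus "r = 0" unfolding r_def by simp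
  qed
  have "(t+2) * eE t a b c \<ge> 0" unfolding idt using core[OF t p0 pq schur disc q0] .
  thus ?thesis using tp by (simp add: zero_le_mult_iff)
qed


lemma main2:
  fixes t :: real and f :: poly3
  assumes t: "t \<ge> 7" and fP: "f \<in> P35" and z1: "f t 1 1 = 0" and z2: "f 0 1 1 = 0" and z3: "f 0 0 1 = 0"
  shows "\<exists>l::real\<ge>0. f = (\<lambda>a b c. l * eE t a b c)"
proof -
  obtain c0 c1 c2 c3 c4 where fd: "f = (\<lambda>a b c.
      c0 * s0 a b c + c1 * s1 a b c + c2 * s2 a b c + c3 * s3 a b c + c4 * s4 a b c)"
    using fP unfolding P35_def H35_def by blast
  have nn: "\<And>a b c. a \<ge> 0 \<Longrightarrow> b \<ge> 0 \<Longrightarrow> c \<ge> 0 \<Longrightarrow> f a b c \<ge> 0"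
    using fP unfolding P35_def by blast
  have tp: "t > 0" "t + 2 > 0" "t - 1 \<noteq> 0" using t by simp_all
  have C0: "c0 = 0" using z3 unfolding fd ev by simp
  have C2: "c2 = -c1" using z2 unfolding fd ev C0 by simp
  have C1: "c1 \<ge> 0" using nn[of 0 1 2] unfolding fd ev C0 C2 by simp
  have gx: "\<And>x. f x 1 1 = c0*(x^5 - 2*x^2 - x + 2) + c1*(2*x^4-4*x^2+2) + c2*(2*x^3-2*x^2-2*x+2)
      + c3*(x^3-2*x^2+x) + c4*(2*x^2+x)"
    unfolding fd ev by (simp add: algebra_simps power2_eq_square power3_eq_cube pw4 pw5)
  define D where "D = c0*(5*t^4 - 4*t - 1) + c1*(8*t^3-8*t) + c2*(6*t^2-4*t-2)
      + c3*(3*t^2-4*t+1) + c4*(4*t+1)"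
  have der: "((\<lambda>x. f x 1 1) has_real_derivative D) (at t)"
    unfolding gx D_def
    by (auto intro!: derivative_eq_intros simp: algebra_simps power2_eq_square power3_eq_cube pw4)
  have "D = 0"
  proof (rule DERIV_local_min[OF der, of t])
    show "0 < t" using tp by simp
    show "\<forall>y. \<bar>t - y\<bar> < t \<longrightarrow> f t 1 1 \<le> f y 1 1"
      using nn z1 by (auto simp: abs_if split: if_splits)
  qed
  hence E2: "c1*(8*t^3-8*t) - c1*(6*t^2-4*t-2) + c3*(3*t^2-4*t+1) + c4*(4*t+1) = 0"
    unfolding D_def C0 C2 by (simp add: algebra_simps)
  have E1: "c1*(2*t^4-4*t^2+2) - c1*(2*t^3-2*t^2-2*t+2) + c3*(t^3-2*t^2+t) + c4*(2*t^2+t) = 0"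
    using z1 unfolding gx C0 C2 by (simp add: algebra_simps)
  define g1 where "g1 = c1*(2*t^4-4*t^2+2) - c1*(2*t^3-2*t^2-2*t+2) + c3*(t^3-2*t^2+t) + c4*(2*t^2+t)"
  define g2 where "g2 = c1*(8*t^3-8*t) - c1*(6*t^2-4*t-2) + c3*(3*t^2-4*t+1) + c4*(4*t+1)"
  have id1: "(4*t+1)*g1 - (2*t+1)*t*g2 = -2*t^2*(t-1)*((t+2)*c3+(4*t^2+5*t+3)*c1)"
    unfolding g1_def g2_def by (simp add: algebra_simps power2_eq_square power3_eq_cube pw4)
  have "-2*t^2*(t-1)*((t+2)*c3+(4*t^2+5*t+3)*c1) = 0"
    using id1 E1 E2 unfolding g1_def[symmetric] g2_def[symmetric] by simp
  hence "(t+2)*c3+(4*t^2+5*t+3)*c1 = 0" using tp by simp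
  hence C3: "(t+2)*c3 = -((4*t^2+5*t+3)*c1)" by (simp add: eq_neg_iff_add_eq_0)
  have id2: "(t+2)*g1 = t*((2*t+1)*((t+2)*c4 - c1*(t-1)^3)) + t*(t-1)^2 * ((t+2)*c3 + (4*t^2+5*t+3)*c1)"
    unfolding g1_def by (simp add: algebra_simps power2_eq_square power3_eq_cube pw4)
  have "t*((2*t+1)*((t+2)*c4 - c1*(t-1)^3)) = 0"
    using id2 E1 C3 unfolding g1_def[symmetric] by simp
  hence C4: "(t+2)*c4 = c1*(t-1)^3" using tp by simp
  have c3e: "c3 = -((4*t^2+5*t+3)/(t+2))*c1" using C3 tp by (simp add: field_simps)
  have c4e: "c4 = ((t-1)^3/(t+2))*c1" using C4 tp by (simp add: field_simps)
  have "f = (\<lambda>a b c. c1 * eE t a b c)"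
    unfolding fd eE_def C0 C2 c3e c4e by (rule ext)+ (simp add: algebra_simps)
  thus ?thesis using C1 by blast
qed


lemma eE_vals:
  fixes t :: real assumes t: "t \<ge> 7"
  shows "eE t t 1 1 = 0" "eE t 0 1 1 = 0" "eE t 0 0 1 = 0" "eE t 0 1 2 = 6"
proof -
  have tp: "t + 2 > 0" using t by simp
  show "eE t t 1 1 = 0" unfolding eE_def ev using tp
    by (simp add: field_simps) (simp add: algebra_simps power2_eq_square power3_eq_cube pw4 pw5)
  show "eE t 0 1 1 = 0" "eE t 0 0 1 = 0" "eE t 0 1 2 = 6" unfolding eE_def ev by simp_all
qed

lemma part1:
  fixes t :: real assumes t: "t \<ge> 7"
  shows "eE t \<in> extremal P35"
proof -
  have H: "eE t \<in> H35" unfolding H35_def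
  proof (rule CollectI, intro exI)
    show "eE t = (\<lambda>a b c. 0 * s0 a b c + 1 * s1 a b c + (-1) * s2 a b c
        + (-((4*t^2 + 5*t + 3) / (t + 2))) * s3 a b c + ((t - 1)^3 / (t + 2)) * s4 a b c)"
      unfolding eE_def by (rule ext)+ simp
  qed
  have P: "eE t \<in> P35" unfolding P35_def using H eE_nonneg[OF t] by blast
  have nz: "eE t \<noteq> (\<lambda>a b c. 0)"
  proof
    assume "eE t = (\<lambda>a b c. 0)"
    hence "eE t 0 1 2 = 0" by simp
    thus False using eE_vals[OF t] by simp
  qed
  have ex: "\<forall>g \<in> P35. \<forall>h \<in> P35. eE t = (\<lambda>a b c. g a b c + h a b c) \<longrightarrow>
        (\<exists>l\<ge>0. g = (\<lambda>a b c. l * eE t a b c)) \<and> (\<exists>l\<ge>0. h = (\<lambda>a b c. l * eE t a b c))"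
  proof (intro ballI impI)
    fix g h assume g: "g \<in> P35" and h: "h \<in> P35" and sum: "eE t = (\<lambda>a b c. g a b c + h a b c)"
    have gn: "\<And>a b c. a \<ge> 0 \<Longrightarrow> b \<ge> 0 \<Longrightarrow> c \<ge> 0 \<Longrightarrow> g a b c \<ge> 0"
      using g unfolding P35_def by blast
    have hn: "\<And>a b c. a \<ge> 0 \<Longrightarrow> b \<ge> 0 \<Longrightarrow> c \<ge> 0 \<Longrightarrow> h a b c \<ge> 0"
      using h unfolding P35_def by blast
    have sv: "\<And>a b c. eE t a b c = g a b c + h a b c" using sum by metis
    have z: "\<And>a b c. a \<ge> 0 \<Longrightarrow> b \<ge> 0 \<Longrightarrow> c \<ge> 0 \<Longrightarrow> eE t a b c = 0 \<Longrightarrow> g a b c = 0 \<and> h a b c = 0"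
      using gn hn sv by (smt (verit))
    have t0: "t \<ge> 0" using t by simp
    have gz: "g t 1 1 = 0" "g 0 1 1 = 0" "g 0 0 1 = 0" "h t 1 1 = 0" "h 0 1 1 = 0" "h 0 0 1 = 0"
      using z[of t 1 1] z[of 0 1 1] z[of 0 0 1] eE_vals[OF t] t0 by auto
    show "(\<exists>l\<ge>0. g = (\<lambda>a b c. l * eE t a b c)) \<and> (\<exists>l\<ge>0. h = (\<lambda>a b c. l * eE t a b c))"
      using main2[OF t g gz(1-3)] main2[OF t h gz(4-6)] by blast
  qed
  show ?thesis unfolding extremal_def using P nz ex by blast
qed


lemma s4_char:
  fixes g :: poly3
  assumes gP: "g \<in> P35" and le: "\<And>a b c. a \<ge> 0 \<Longrightarrow> b \<ge> 0 \<Longrightarrow> c \<ge> 0 \<Longrightarrow> g a b c \<le> s4 a b c"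
  shows "\<exists>l\<ge>0. g = (\<lambda>a b c. l * s4 a b c)"
proof -
  obtain d0 d1 d2 d3 d4 where gd: "g = (\<lambda>a b c.
      d0 * s0 a b c + d1 * s1 a b c + d2 * s2 a b c + d3 * s3 a b c + d4 * s4 a b c)"
    using gP unfolding P35_def H35_def by blast
  have nn: "\<And>a b c. a \<ge> 0 \<Longrightarrow> b \<ge> 0 \<Longrightarrow> c \<ge> 0 \<Longrightarrow> g a b c \<ge> 0"
    using gP unfolding P35_def by blast
  have "g 0 0 1 = 0" using nn[of 0 0 1] le[of 0 0 1] unfolding ev by simp
  hence D0: "d0 = 0" unfolding gd ev by simp
  have "g 0 1 1 = 0" using nn[of 0 1 1] le[of 0 1 1] unfolding ev by simp
  hence D2: "d2 = -d1" unfolding gd ev D0 by simp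
  have "g 0 1 2 = 0" using nn[of 0 1 2] le[of 0 1 2] unfolding ev by simp
  hence D1: "d1 = 0" unfolding gd ev D0 D2 by simp
  have gx: "\<And>y. g (1+y) 1 1 = (1+y)*(d3*y^2 + d4*(2*y+3))"
    unfolding gd ev D0 D1 D2 by (simp add: algebra_simps power2_eq_square power3_eq_cube)
  have sx: "\<And>y. s4 (1+y) 1 1 = (1+y)*(2*y+3)"
    unfolding ev by (simp add: algebra_simps)
  have b1: "\<And>y. y \<ge> 0 \<Longrightarrow> 0 \<le> d3*y^2 + d4*(2*y+3)"
  proof -
    fix y :: real assume y: "y \<ge> 0"
    have "0 \<le> (1+y)*(d3*y^2 + d4*(2*y+3))" using nn[of "1+y" 1 1] y gx by simp
    thus "0 \<le> d3*y^2 + d4*(2*y+3)" using y by (simp add: zero_le_mult_iff)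
  qed
  have b2: "\<And>y. y \<ge> 0 \<Longrightarrow> d3*y^2 + d4*(2*y+3) \<le> 2*y+3"
  proof -
    fix y :: real assume y: "y \<ge> 0"
    have "(1+y)*(d3*y^2 + d4*(2*y+3)) \<le> (1+y)*(2*y+3)" using le[of "1+y" 1 1] y gx sx by simp
    thus "d3*y^2 + d4*(2*y+3) \<le> 2*y+3" using y by (simp add: mult_le_cancel_left_pos)
  qed
  have D4: "0 \<le> d4" "d4 \<le> 1" using b1[of 0] b2[of 0] by simp_all
  have D3: "d3 = 0"
  proof (rule ccontr)
    assume "d3 \<noteq> 0"
    hence ap: "\<bar>d3\<bar> > 0" by simp
    define y where "y = 5/\<bar>d3\<bar> + 1"
    have y1: "y \<ge> 1" unfolding y_def using ap by simp
    have "\<bar>d3\<bar>*y = 5 + \<bar>d3\<bar>" unfolding y_def using ap by (simp add: field_simps)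
    hence "\<bar>d3\<bar>*y > 5" using ap by simp
    hence big: "\<bar>d3\<bar>*y^2 > 5*y" using y1 unfolding power2_eq_square
      by (metis mult.assoc mult.commute mult_strict_right_mono order_less_le_trans zero_less_one)
    have l1: "d3*y^2 \<ge> -(2*y+3)" using b1[of y] y1 D4 by (smt (verit) mult_left_le_one_le)
    have l2: "d3*y^2 \<le> 2*y+3" using b2[of y] y1 D4 by (smt (verit) mult_nonneg_nonneg)
    have "\<bar>d3\<bar>*y^2 \<le> 2*y+3" using l1 l2 by (cases "d3 \<ge> 0") (auto simp: abs_if)
    thus False using big y1 by simp
  qed
  have "g = (\<lambda>a b c. d4 * s4 a b c)" unfolding gd D0 D1 D2 D3 by simp
  thus ?thesis using D4 by blast
qed

lemma part3: "s4 \<in> extremal P35"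
proof -
  have H: "s4 \<in> H35" unfolding H35_def
  proof (rule CollectI, intro exI)
    show "s4 = (\<lambda>a b c. 0 * s0 a b c + 0 * s1 a b c + 0 * s2 a b c + 0 * s3 a b c + 1 * s4 a b c)"
      by simp
  qed
  have nn: "\<And>a b c. a \<ge> 0 \<Longrightarrow> b \<ge> 0 \<Longrightarrow> c \<ge> 0 \<Longrightarrow> s4 a b c \<ge> 0"
    unfolding ev by simp
  have P: "s4 \<in> P35" unfolding P35_def using H nn by blast
  have nz: "s4 \<noteq> (\<lambda>a b c. 0)"
  proof
    assume "s4 = (\<lambda>a b c. 0)"
    hence "s4 1 1 1 = (\<lambda>a b c. (0::real)) 1 1 1" by (rule arg_cong[where f="\<lambda>F. F 1 1 1"])
    hence "s4 1 1 1 = 0" by simp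
    thus False unfolding ev by simp
  qed
  have ex: "\<forall>g \<in> P35. \<forall>h \<in> P35. s4 = (\<lambda>a b c. g a b c + h a b c) \<longrightarrow>
        (\<exists>l\<ge>0. g = (\<lambda>a b c. l * s4 a b c)) \<and> (\<exists>l\<ge>0. h = (\<lambda>a b c. l * s4 a b c))"
  proof (intro ballI impI)
    fix g h assume g: "g \<in> P35" and h: "h \<in> P35" and sum: "s4 = (\<lambda>a b c. g a b c + h a b c)"
    have gn: "\<And>a b c. a \<ge> 0 \<Longrightarrow> b \<ge> 0 \<Longrightarrow> c \<ge> 0 \<Longrightarrow> g a b c \<ge> 0"
      using g unfolding P35_def by blast
    have hn: "\<And>a b c. a \<ge> 0 \<Longrightarrow> b \<ge> 0 \<Longrightarrow> c \<ge> 0 \<Longrightarrow> h a b c \<ge> 0"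
      using h unfolding P35_def by blast
    have sv: "\<And>a b c. s4 a b c = g a b c + h a b c" using sum by metis
    have lg: "\<And>a b c. a \<ge> 0 \<Longrightarrow> b \<ge> 0 \<Longrightarrow> c \<ge> 0 \<Longrightarrow> g a b c \<le> s4 a b c"
      using hn sv by (smt (verit))
    have lh: "\<And>a b c. a \<ge> 0 \<Longrightarrow> b \<ge> 0 \<Longrightarrow> c \<ge> 0 \<Longrightarrow> h a b c \<le> s4 a b c"
      using gn sv by (smt (verit))
    show "(\<exists>l\<ge>0. g = (\<lambda>a b c. l * s4 a b c)) \<and> (\<exists>l\<ge>0. h = (\<lambda>a b c. l * s4 a b c))"
      using s4_char[OF g lg] s4_char[OF h lh] by blast
  qed
  show ?thesis unfolding extremal_def using P nz ex by blast
qed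

lemma part4:
  fixes f :: poly3
  assumes fP: "f \<in> P35" and z2: "f 0 1 1 = 0" and z3: "f 0 0 1 = 0"
    and da: "pd_a f 0 0 1 = 0" and dab: "pd_ab f 0 0 1 = 0"
  shows "\<exists>l::real\<ge>0. f = (\<lambda>a b c. l * s4 a b c)"
proof -
  obtain c0 c1 c2 c3 c4 where fd: "f = (\<lambda>a b c.
      c0 * s0 a b c + c1 * s1 a b c + c2 * s2 a b c + c3 * s3 a b c + c4 * s4 a b c)"
    using fP unfolding P35_def H35_def by blast
  have nn: "\<And>a b c. a \<ge> 0 \<Longrightarrow> b \<ge> 0 \<Longrightarrow> c \<ge> 0 \<Longrightarrow> f a b c \<ge> 0"
    using fP unfolding P35_def by blast
  have C0: "c0 = 0" using z3 unfolding fd ev by simp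
  have C2: "c2 = -c1" using z2 unfolding fd ev C0 by simp
  define P where "P = (\<lambda>y::real. c1*(1+y^4-2*y^2) + 2*c1*y^2 + c3*(y^3-y^2+y) + c4*y^2)"
  have pa: "\<And>y. pd_a f 0 y 1 = P y"
  proof -
    fix y :: real
    have "((\<lambda>x. f x y 1) has_real_derivative P y) (at 0)"
      unfolding fd ev C0 C2 P_def
      by (auto intro!: derivative_eq_intros simp: algebra_simps power2_eq_square power3_eq_cube pw4 pw5)
    thus "pd_a f 0 y 1 = P y" unfolding pd_a_def by (rule DERIV_imp_deriv)
  qed
  have C1: "c1 = 0" using da pa[of 0] unfolding P_def by simp
  have "(P has_real_derivative c3) (at 0)"
    unfolding P_def
    by (auto intro!: derivative_eq_intros simp: algebra_simps power2_eq_square power3_eq_cube pw4)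
  hence "deriv P 0 = c3" by (rule DERIV_imp_deriv)
  moreover have "pd_ab f 0 0 1 = deriv P 0" unfolding pd_ab_def using pa by (metis ext)
  ultimately have C3: "c3 = 0" using dab by simp
  have "f 1 1 1 = 3*c4" unfolding fd ev C0 C2 C1 C3 by simp
  hence C4: "c4 \<ge> 0" using nn[of 1 1 1] by simp
  have "f = (\<lambda>a b c. c4 * s4 a b c)" unfolding fd C0 C2 C1 C3 by simp
  thus ?thesis using C4 by blast
qed

theorem theorem4p5:
  shows "(\<forall>t::real. t \<ge> 7 \<longrightarrow> eE t \<in> extremal P35)
    \<and> (\<forall>(t::real) f. t \<ge> 7 \<longrightarrow> f \<in> P35 \<longrightarrow> f t 1 1 = 0 \<longrightarrow> f 0 1 1 = 0 \<longrightarrow> f 0 0 1 = 0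
          \<longrightarrow> (\<exists>l::real\<ge>0. f = (\<lambda>a b c. l * eE t a b c)))
    \<and> s4 \<in> extremal P35
    \<and> (\<forall>f. f \<in> P35 \<longrightarrow> f 0 1 1 = 0 \<longrightarrow> f 0 0 1 = 0 \<longrightarrow> pd_a f 0 0 1 = 0 \<longrightarrow> pd_ab f 0 0 1 = 0
          \<longrightarrow> (\<exists>l::real\<ge>0. f = (\<lambda>a b c. l * s4 a b c)))"
  using part1 main2 part3 part4 by blast

end
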